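(* There is an absolute constant $C$ such that for every $n\geq 1$ and every $w\in\{0,1\}^n$, there is a first-order sentence over $\tau_{\mathsf{string}}$ with at most $3\log_3(n)+C$ quantifiers that is true in $\mathbf{B}_w$ and false in $\mathbf{B}_{w'}$ for every binary string $w'\neq w$ of any length $\geq 1$.
   Context: Vocabulary $\tau_{\mathsf{string}}=\langle <, S;\ \mathsf{min},\mathsf{max}\rangle$ with $<$ binary, $S$ unary, $\mathsf{min},\mathsf{max}$ constants. A string $w=w_1\cdots w_n\in\{0,1\}^n$ ($n\geq 1$) is encoded by the structure $\mathbf{B}_w$ with universe $\{1,\dots,n\}$, $<$ the usual order, $S=\{i: w_i=1\}$, $\mathsf{min}=1$, $\mathsf{max}=n$. The number of quantifiers is the number of quantifier occurrences. *)

theory Defs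
  imports Complex_Main
begin

text \<open>First-order logic over the string vocabulary (<, S; min, max).
  Variables are natural numbers. A binary string is a nonempty bool list;
  position i (1-based) carries letter 1 iff w ! (i - 1).\<close>

datatype fterm = V nat | MinC | MaxC

datatype fo =
    Eq fterm fterm
  | Less fterm fterm
  | S fterm
  | Neg fo
  | Conj fo fo
  | Disj fo fo
  | Ex nat fo
  | All nat fo

fun tvars :: "fterm \<Rightarrow> nat set" where
  "tvars (V x) = {x}"
| "tvars MinC = {}"
| "tvars MaxC = {}"

fun free_vars :: "fo \<Rightarrow> nat set" where
  "free_vars (Eq s t) = tvars s \<union> tvars t"
| "free_vars (Less s t) = tvars s \<union> tvars t"
| "free_vars (S t) = tvars t"
| "free_vars (Neg \<phi>) = free_vars \<phi>"
| "free_vars (Conj \<phi> \<psi>) = free_vars \<phi> \<union> free_vars \<psi>"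
| "free_vars (Disj \<phi> \<psi>) = free_vars \<phi> \<union> free_vars \<psi>"
| "free_vars (Ex x \<phi>) = free_vars \<phi> - {x}"
| "free_vars (All x \<phi>) = free_vars \<phi> - {x}"

definition sentence :: "fo \<Rightarrow> bool" where
  "sentence \<phi> \<longleftrightarrow> free_vars \<phi> = {}"

fun qcount :: "fo \<Rightarrow> nat" where
  "qcount (Eq s t) = 0"
| "qcount (Less s t) = 0"
| "qcount (S t) = 0"
| "qcount (Neg \<phi>) = qcount \<phi>"
| "qcount (Conj \<phi> \<psi>) = qcount \<phi> + qcount \<psi>"
| "qcount (Disj \<phi> \<psi>) = qcount \<phi> + qcount \<psi>"
| "qcount (Ex x \<phi>) = Suc (qcount \<phi>)"
| "qcount (All x \<phi>) = Suc (qcount \<phi>)"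

fun teval :: "bool list \<Rightarrow> (nat \<Rightarrow> nat) \<Rightarrow> fterm \<Rightarrow> nat" where
  "teval w v (V x) = v x"
| "teval w v MinC = 1"
| "teval w v MaxC = length w"

fun sat :: "bool list \<Rightarrow> (nat \<Rightarrow> nat) \<Rightarrow> fo \<Rightarrow> bool" where
  "sat w v (Eq s t) = (teval w v s = teval w v t)"
| "sat w v (Less s t) = (teval w v s < teval w v t)"
| "sat w v (S t) = (w ! (teval w v t - 1))"
| "sat w v (Neg \<phi>) = (\<not> sat w v \<phi>)"
| "sat w v (Conj \<phi> \<psi>) = (sat w v \<phi> \<and> sat w v \<psi>)"
| "sat w v (Disj \<phi> \<psi>) = (sat w v \<phi> \<or> sat w v \<psi>)"
| "sat w v (Ex x \<phi>) = (\<exists>i\<in>{1..length w}. sat w (v(x := i)) \<phi>)"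
| "sat w v (All x \<phi>) = (\<forall>i\<in>{1..length w}. sat w (v(x := i)) \<phi>)"

text \<open>Truth of a sentence in B_w (the valuation is irrelevant for sentences;
  we use the constant valuation 1, which lies in the universe).\<close>
definition models :: "bool list \<Rightarrow> fo \<Rightarrow> bool" where
  "models w \<phi> \<longleftrightarrow> sat w (\<lambda>_. 1) \<phi>"

end

theory Submission
  imports Defs
begin



fun pren :: "(bool \<times> nat) list \<Rightarrow> fo \<Rightarrow> fo" where
  "pren [] m = m"
| "pren ((b,x)#qs) m = (if b then Ex x (pren qs m) else All x (pren qs m))"

fun sem :: "bool list \<Rightarrow> (bool \<times> nat) list \<Rightarrow> ((nat \<Rightarrow> nat) \<Rightarrow> bool) \<Rightarrow> (nat \<Rightarrow> nat) \<Rightarrow> bool" where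
  "sem w [] P v = P v"
| "sem w ((b,x)#qs) P v = (if b then (\<exists>i\<in>{1..length w}. sem w qs P (v(x:=i)))
                                  else (\<forall>i\<in>{1..length w}. sem w qs P (v(x:=i))))"

lemma sat_pren: "sat w v (pren qs m) = sem w qs (\<lambda>v. sat w v m) v"
  by (induction qs arbitrary: v) auto

lemma sem_ite:
  assumes "\<And>v'. (\<forall>y. y \<notin> snd ` set qs \<longrightarrow> v' y = v y) \<Longrightarrow> c v' = c v"
  shows "sem w qs (\<lambda>v. if c v then P v else Q v) v = (if c v then sem w qs P v else sem w qs Q v)"
  using assms
proof (induction qs arbitrary: v)
  case Nil
  then show ?case by auto
next
  case (Cons q qs)
  obtain b x where q: "q = (b,x)" by fastforce
  have "\<And>i. sem w qs (\<lambda>v. if c v then P v else Q v) (v(x:=i)) =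
        (if c v then sem w qs P (v(x:=i)) else sem w qs Q (v(x:=i)))"
  proof -
    fix i
    have cv: "c v' = c v" if h: "\<forall>y. y \<notin> snd ` set qs \<longrightarrow> v' y = (v(x:=i)) y" for v'
      by (rule Cons.prems) (use h q in auto)
    have cvi: "c (v(x:=i)) = c v" by (rule Cons.prems) (use q in auto)
    have inv: "\<And>v'. (\<forall>y. y \<notin> snd ` set qs \<longrightarrow> v' y = (v(x:=i)) y) \<Longrightarrow> c v' = c (v(x:=i))"
      using cv cvi by simp
    have "c (v(x:=i)) = c v" by (rule cvi)
    have e: "sem w qs (\<lambda>v. if c v then P v else Q v) (v(x:=i)) = (if c (v(x:=i)) then sem w qs P (v(x:=i)) else sem w qs Q (v(x:=i)))"
      by (rule Cons.IH[OF inv])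
    show "?thesis i" by (subst e, subst cvi, rule refl)
  qed
  then show ?case using q by auto
qed

lemma sem_conj:
  assumes "length w \<ge> 1" "\<And>v'. (\<forall>y. y \<notin> snd ` set qs \<longrightarrow> v' y = v y) \<Longrightarrow> c v' = c v"
  shows "sem w qs (\<lambda>v. c v \<and> P v) v = (c v \<and> sem w qs P v)"
  using assms(2)
proof (induction qs arbitrary: v)
  case Nil
  then show ?case by auto
next
  case (Cons q qs)
  obtain b x where q: "q = (b,x)" by fastforce
  have "\<And>i. sem w qs (\<lambda>v. c v \<and> P v) (v(x:=i)) = (c v \<and> sem w qs P (v(x:=i)))"
  proof -
    fix i
    have cv: "c v' = c v" if h: "\<forall>y. y \<notin> snd ` set qs \<longrightarrow> v' y = (v(x:=i)) y" for v'
      by (rule Cons.prems) (use h q in auto)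
    have cvi: "c (v(x:=i)) = c v" by (rule Cons.prems) (use q in auto)
    have inv: "\<And>v'. (\<forall>y. y \<notin> snd ` set qs \<longrightarrow> v' y = (v(x:=i)) y) \<Longrightarrow> c v' = c (v(x:=i))"
      using cv cvi by simp
    have "c (v(x:=i)) = c v" by (rule cvi)
    have e: "sem w qs (\<lambda>v. c v \<and> P v) (v(x:=i)) = (c (v(x:=i)) \<and> sem w qs P (v(x:=i)))"
      by (rule Cons.IH[OF inv])
    show "?thesis i" by (subst e, subst cvi, rule refl)
  qed
  moreover have "1 \<in> {1..length w}" using assms(1) by auto
  ultimately show ?case using q by auto
qed

lemma teval_cong: "\<forall>x\<in>tvars s. v x = v' x \<Longrightarrow> teval w v s = teval w v' s"
  by (cases s) auto

lemma sat_cong: "\<forall>x\<in>free_vars \<phi>. v x = v' x \<Longrightarrow> sat w v \<phi> = sat w v' \<phi>"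
proof (induction \<phi> arbitrary: v v')
  case (Eq s t)
  then have "teval w v s = teval w v' s" "teval w v t = teval w v' t" by (auto intro!: teval_cong)
  then show ?case by simp
next
  case (Less s t)
  then have "teval w v s = teval w v' s" "teval w v t = teval w v' t" by (auto intro!: teval_cong)
  then show ?case by simp
next
  case (S t)
  then have "teval w v t = teval w v' t" by (auto intro!: teval_cong)
  then show ?case by simp
next
  case (Neg \<phi>)
  then show ?case by simp
next
  case (Conj \<phi> \<psi>)
  then have "sat w v \<phi> = sat w v' \<phi>" "sat w v \<psi> = sat w v' \<psi>" by auto
  then show ?case by simp
next
  case (Disj \<phi> \<psi>)
  then have "sat w v \<phi> = sat w v' \<phi>" "sat w v \<psi> = sat w v' \<psi>" by auto
  then show ?case by simp
next
  case (Ex x \<phi>)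
  have "\<And>i. sat w (v(x:=i)) \<phi> = sat w (v'(x:=i)) \<phi>" using Ex by (intro Ex.IH) auto
  then show ?case by simp
next
  case (All x \<phi>)
  have "\<And>i. sat w (v(x:=i)) \<phi> = sat w (v'(x:=i)) \<phi>" using All by (intro All.IH) auto
  then show ?case by simp
qed




definition spells :: "bool list \<Rightarrow> nat \<Rightarrow> nat \<Rightarrow> bool list \<Rightarrow> bool" where
  "spells w a b t \<longleftrightarrow> 1 \<le> a \<and> b \<le> length w \<and> b + 1 = a + length t \<and> (\<forall>m<length t. w!(a-1+m) = t!m)"

definition relN :: "nat \<Rightarrow> nat \<Rightarrow> nat \<Rightarrow> bool" where
  "relN k x y \<longleftrightarrow> (if k = 0 then x = y else x < y)"

lemma spells_sub:
  assumes "spells w a b t" "1 \<le> l" "p + l \<le> length t"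
  shows "spells w (a+p) (a+p+l-1) (take l (drop p t))"
  unfolding spells_def
proof (intro conjI allI impI)
  have sp: "1 \<le> a" "b \<le> length w" "b + 1 = a + length t" "\<forall>m<length t. w!(a-1+m) = t!m"
    using assms(1) unfolding spells_def by auto
  show "1 \<le> a + p" using sp by simp
  show "a + p + l - 1 \<le> length w" using sp assms by simp
  show "a + p + l - 1 + 1 = a + p + length (take l (drop p t))" using assms by simp
  fix m assume m: "m < length (take l (drop p t))"
  then have "p + m < length t" by auto
  then have X: "w!(a-1+(p+m)) = t!(p+m)" using sp by blast
  have e: "a + p - 1 + m = a - 1 + (p + m)" using sp by simp
  have Y: "take l (drop p t) ! m = t ! (p+m)" using m assms(3) by simp
  have "w ! (a + p - 1 + m) = w ! (a - 1 + (p + m))" by (simp only: e)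
  also have "\<dots> = t ! (p+m)" by (rule X)
  also have "\<dots> = take l (drop p t) ! m" by (rule Y[symmetric])
  finally show "w ! (a + p - 1 + m) = take l (drop p t) ! m" .
qed


lemma spells_len: "spells w a b t \<Longrightarrow> b + 1 = a + length t"
  unfolding spells_def by auto

lemma split_core:
  assumes tne: "t \<noteq> []" and kd: "k = length t - 1" and k1: "k1 \<le> k" and k2: "k2 \<le> k - k1"
    and k3: "k3 = k - k1 - k2" and a: "1 \<le> a" "a \<le> length w" and b: "1 \<le> b" "b \<le> length w"
  shows "(\<exists>i\<in>{1..length w}. \<exists>j\<in>{1..length w}. \<forall>l\<in>{1..length w}.
            (relN k1 a i \<and> relN k2 i j \<and> relN k3 j b) \<and>
            (if l = j then spells w l b (drop (k1+k2) t)
             else if l = i then spells w l j (take (k2+1) (drop k1 t))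
             else if l = a then spells w l i (take (k1+1) t) else True))
         \<longleftrightarrow> spells w a b t" (is "?L \<longleftrightarrow> ?R")
proof -
  have lt: "length t \<ge> 1" using tne by (cases t) auto
  show ?thesis
proof
  assume R: ?R
  have bk: "b = a + k" using R lt kd unfolding spells_def by (cases t) auto
  define i where "i = a + k1"
  define j where "j = a + k1 + k2"
  have ij: "i \<in> {1..length w}" "j \<in> {1..length w}" using a b bk k1 k2 unfolding i_def j_def by auto
  have rel: "relN k1 a i \<and> relN k2 i j \<and> relN k3 j b"
    unfolding relN_def i_def j_def using bk k3 k1 k2 by auto
  have s3: "spells w j b (drop (k1+k2) t)"
  proof -
    have "spells w (a+(k1+k2)) (a+(k1+k2)+(k3+1)-1) (take (k3+1) (drop (k1+k2) t))"
      by (rule spells_sub[OF R]) (use kd k3 k1 k2 lt in auto)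
    moreover have "take (k3+1) (drop (k1+k2) t) = drop (k1+k2) t" using kd k3 k1 k2 lt by auto
    ultimately show ?thesis using bk k3 k1 k2 unfolding j_def by (simp add: add.assoc)
  qed
  have s2: "spells w i j (take (k2+1) (drop k1 t))"
  proof -
    have "spells w (a+k1) (a+k1+(k2+1)-1) (take (k2+1) (drop k1 t))"
      by (rule spells_sub[OF R]) (use kd k3 k1 k2 lt in auto)
    then show ?thesis unfolding i_def j_def by simp
  qed
  have s1: "spells w a i (take (k1+1) t)"
  proof -
    have "spells w (a+0) (a+0+(k1+1)-1) (take (k1+1) (drop 0 t))"
      by (rule spells_sub[OF R]) (use kd k3 k1 k2 lt in auto)
    then show ?thesis unfolding i_def by simp
  qed
  show ?L using ij rel s1 s2 s3 by (intro bexI[of _ i] bexI[of _ j]) auto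
next
  assume ?L
  then obtain i j where ij: "i \<in> {1..length w}" "j \<in> {1..length w}"
    and rel: "relN k1 a i" "relN k2 i j" "relN k3 j b"
    and H: "\<And>l. l \<in> {1..length w} \<Longrightarrow> (if l = j then spells w l b (drop (k1+k2) t)
             else if l = i then spells w l j (take (k2+1) (drop k1 t))
             else if l = a then spells w l i (take (k1+1) t) else True)" by blast
  have s3: "spells w j b (drop (k1+k2) t)" using H[of j] ij by simp
  have i_eq: "i = a + k1"
  proof (cases "k1 = 0")
    case True then show ?thesis using rel unfolding relN_def by simp
  next
    case False
    then have "a < i" using rel unfolding relN_def by simp
    moreover have "i \<le> j" using rel unfolding relN_def by (auto split: if_splits)
    ultimately have "spells w a i (take (k1+1) t)" using H[of a] a by auto
    note spells_len[OF this]
    then show ?thesis using kd k1 lt by auto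
  qed
  have j_eq: "j = i + k2"
  proof (cases "k2 = 0")
    case True then show ?thesis using rel unfolding relN_def by simp
  next
    case False
    then have "i < j" using rel unfolding relN_def by simp
    then have "spells w i j (take (k2+1) (drop k1 t))" using H[of i] ij by auto
    note spells_len[OF this]
    then show ?thesis using kd k1 k2 lt by auto
  qed
  have bj: "b = j + k3" using spells_len[OF s3] kd k1 k2 k3 lt by auto
  show ?R unfolding spells_def
  proof (intro conjI allI impI)
    show "1 \<le> a" "b \<le> length w" by fact+
    show "b + 1 = a + length t" using bj i_eq j_eq kd k3 k1 k2 lt by auto
    fix m assume m: "m < length t"
    show "w ! (a - 1 + m) = t ! m"
    proof (cases "k1 + k2 \<le> m")
      case True
      then show ?thesis using s3 m i_eq j_eq a unfolding spells_def
        by (auto dest!: spec[of _ "m - (k1+k2)"])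
    next
      case False
      show ?thesis
      proof (cases "k1 \<le> m")
        case True
        then have "k2 \<noteq> 0" using False by auto
        then have "i < j" using rel unfolding relN_def by simp
        then have "spells w i j (take (k2+1) (drop k1 t))" using H[of i] ij by auto
        then show ?thesis using True False m i_eq a unfolding spells_def
          by (auto dest!: spec[of _ "m - k1"])
      next
        case False
        then have "k1 \<noteq> 0" by auto
        then have "a < i" using rel unfolding relN_def by simp
        moreover have "i \<le> j" using rel unfolding relN_def by (auto split: if_splits)
        ultimately have "spells w a i (take (k1+1) t)" using H[of a] a by auto
        then show ?thesis using False m unfolding spells_def
          by (auto dest!: spec[of _ m])
      qed
    qed
  qed
qed
qed




definition lit :: "bool \<Rightarrow> fterm \<Rightarrow> fo" where
  "lit b A = (if b then S A else Neg (S A))"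
definition ITE :: "fo \<Rightarrow> fo \<Rightarrow> fo \<Rightarrow> fo" where
  "ITE c p q = Disj (Conj c p) (Conj (Neg c) q)"
definition rel :: "nat \<Rightarrow> fterm \<Rightarrow> fterm \<Rightarrow> fo" where
  "rel k X Y = (if k = 0 then Eq X Y else Less X Y)"
definition TT :: fo where "TT = Eq MinC MinC"

primrec prefix :: "nat \<Rightarrow> (bool \<times> nat) list" where
  "prefix 0 = [(False,0)]"
| "prefix (Suc r) = [(True, 3*Suc r), (True, 3*Suc r + 1), (False, 3*Suc r + 2)] @ prefix r"

definition k1f :: "nat \<Rightarrow> bool list \<Rightarrow> nat" where "k1f r t = min (length t - 1) (3^r)"
definition k2f :: "nat \<Rightarrow> bool list \<Rightarrow> nat" where "k2f r t = min (length t - 1 - k1f r t) (3^r)"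
definition k3f :: "nat \<Rightarrow> bool list \<Rightarrow> nat" where "k3f r t = length t - 1 - k1f r t - k2f r t"

primrec Seg :: "nat \<Rightarrow> bool list \<Rightarrow> fterm \<Rightarrow> fterm \<Rightarrow> fo" where
  "Seg 0 t A B = (if length t \<le> 1 then Conj (Eq A B) (lit (t!0) A)
      else Conj (Conj (Less A B) (Neg (Conj (Less A (V 0)) (Less (V 0) B)))) (Conj (lit (t!0) A) (lit (t!1) B)))"
| "Seg (Suc r) t A B =
     Conj (Conj (rel (k1f r t) A (V (3*Suc r))) (Conj (rel (k2f r t) (V (3*Suc r)) (V (3*Suc r+1))) (rel (k3f r t) (V (3*Suc r+1)) B)))
      (ITE (Eq (V (3*Suc r+2)) (V (3*Suc r+1))) (Seg r (drop (k1f r t + k2f r t) t) (V (3*Suc r+2)) B)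
        (ITE (Eq (V (3*Suc r+2)) (V (3*Suc r))) (Seg r (take (k2f r t + 1) (drop (k1f r t) t)) (V (3*Suc r+2)) (V (3*Suc r+1)))
          (ITE (Eq (V (3*Suc r+2)) A) (Seg r (take (k1f r t + 1) t) (V (3*Suc r+2)) (V (3*Suc r))) TT)))"

lemma sat_lit: "sat w v (lit b A) = (w ! (teval w v A - 1) = b)"
  unfolding lit_def by auto
lemma sat_ITE: "sat w v (ITE c p q) = (if sat w v c then sat w v p else sat w v q)"
  unfolding ITE_def by auto
lemma sat_rel: "sat w v (rel k X Y) = relN k (teval w v X) (teval w v Y)"
  unfolding rel_def relN_def by auto
lemma sat_TT: "sat w v TT" unfolding TT_def by auto

lemma teval_range: "length w \<ge> 1 \<Longrightarrow> \<forall>x\<in>tvars A. v x \<in> {1..length w} \<Longrightarrow> teval w v A \<in> {1..length w}"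
  by (cases A) auto

lemma leaf:
  assumes n: "length w \<ge> 1" and tne: "t \<noteq> []" and tl: "length t \<le> 2"
    and vA: "\<forall>x\<in>tvars A \<union> tvars B. 0 < x \<and> v x \<in> {1..length w}"
  shows "sem w (prefix 0) (\<lambda>v. sat w v (Seg 0 t A B)) v \<longleftrightarrow> spells w (teval w v A) (teval w v B) t"
proof -
  have eA: "\<And>i. teval w (v(0:=i)) A = teval w v A" using vA by (intro teval_cong) auto
  have eB: "\<And>i. teval w (v(0:=i)) B = teval w v B" using vA by (intro teval_cong) auto
  define a where "a = teval w v A"
  define b where "b = teval w v B"
  have ar: "a \<in> {1..length w}" "b \<in> {1..length w}" unfolding a_def b_def
    using teval_range[OF n] vA by auto
  have ne: "1 \<in> {1..length w}" using n by auto
  show ?thesis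
  proof (cases "length t \<le> 1")
    case True
    then have lt: "length t = 1" using tne by (cases t) auto
    have "sem w (prefix 0) (\<lambda>v. sat w v (Seg 0 t A B)) v \<longleftrightarrow> (a = b \<and> w!(a-1) = t!0)"
      using True ne by (auto simp: eA eB sat_lit a_def b_def)
    also have "\<dots> \<longleftrightarrow> spells w a b t" using lt ar unfolding spells_def by auto
    finally show ?thesis unfolding a_def b_def .
  next
    case False
    then have lt: "length t = 2" using tl by auto
    have "sem w (prefix 0) (\<lambda>v. sat w v (Seg 0 t A B)) v \<longleftrightarrow>
        (\<forall>i\<in>{1..length w}. a < b \<and> \<not> (a < i \<and> i < b) \<and> w!(a-1) = t!0 \<and> w!(b-1) = t!1)"
      using False by (auto simp: eA eB sat_lit a_def b_def)
    also have "\<dots> \<longleftrightarrow> (b = a + 1 \<and> w!(a-1) = t!0 \<and> w!(b-1) = t!1)"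
    proof
      assume H: "\<forall>i\<in>{1..length w}. a < b \<and> \<not> (a < i \<and> i < b) \<and> w!(a-1) = t!0 \<and> w!(b-1) = t!1"
      then have "a < b" using ne by blast
      moreover have "a + 1 \<in> {1..length w}" using ar \<open>a<b\<close> by auto
      ultimately have "\<not> (a < a+1 \<and> a+1 < b)" using H by blast
      then show "b = a + 1 \<and> w!(a-1) = t!0 \<and> w!(b-1) = t!1" using H ne \<open>a<b\<close> by auto
    qed auto
    also have "\<dots> \<longleftrightarrow> spells w a b t"
    proof
      assume h: "b = a + 1 \<and> w!(a-1) = t!0 \<and> w!(b-1) = t!1"
      show "spells w a b t" unfolding spells_def
      proof (intro conjI allI impI)
        show "1 \<le> a" "b \<le> length w" using ar by auto
        show "b + 1 = a + length t" using h lt by simp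
        fix m assume "m < length t"
        then have "m = 0 \<or> m = 1" using lt by auto
        then show "w ! (a - 1 + m) = t ! m" using h ar by auto
      qed
    next
      assume s: "spells w a b t"
      then have X: "\<forall>m<length t. w!(a-1+m) = t!m" unfolding spells_def by blast
      have "w!(a-1+0) = t!0" using X[rule_format, of 0] lt by simp
      moreover have "w!(a-1+1) = t!1" using X[rule_format, of 1] lt by simp
      moreover have "b = a + 1" using s lt unfolding spells_def by auto
      moreover have "a - 1 + 1 = b - 1" using ar \<open>b = a+1\<close> by auto
      ultimately show "b = a + 1 \<and> w!(a-1) = t!0 \<and> w!(b-1) = t!1" by auto
    qed
    finally show ?thesis unfolding a_def b_def .
  qed
qed




lemma bvars_prefix0: "\<forall>x\<in>snd ` set (prefix r). x < 3*r+3"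
  by (induction r) auto
lemma bvars_prefix: "x \<in> snd ` set (prefix r) \<Longrightarrow> x < 3*r+3"
  using bvars_prefix0 by blast

lemma inv_fv:
  assumes "\<forall>x\<in>free_vars \<phi>. 3*r+3 \<le> x" "\<forall>y. y \<notin> snd ` set (prefix r) \<longrightarrow> v' y = v y"
  shows "sat w v' \<phi> = sat w v \<phi>"
proof (rule sat_cong, intro ballI)
  fix x assume "x \<in> free_vars \<phi>"
  then have "x \<notin> snd ` set (prefix r)" using assms(1) bvars_prefix by fastforce
  then show "v' x = v x" using assms(2) by blast
qed

lemma sem_True: "length w \<ge> 1 \<Longrightarrow> sem w qs (\<lambda>_. True) v"
  by (induction qs arbitrary: v) force+

lemma k3_bound:
  assumes "length t - 1 \<le> 3^Suc r"
  shows "k3f r t \<le> 3^r"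
  using assms unfolding k3f_def k2f_def k1f_def by (auto simp: min_def)

lemma seg_sem:
  assumes n: "length w \<ge> 1"
  shows "t \<noteq> [] \<Longrightarrow> length t - 1 \<le> 3^r \<Longrightarrow> \<forall>x\<in>tvars A \<union> tvars B. 3*r+3 \<le> x \<and> v x \<in> {1..length w} \<Longrightarrow>
    sem w (prefix r) (\<lambda>v. sat w v (Seg r t A B)) v \<longleftrightarrow> spells w (teval w v A) (teval w v B) t"
proof (induction r arbitrary: t A B v)
  case 0
  have vx: "\<forall>x\<in>tvars A \<union> tvars B. 0 < x \<and> v x \<in> {1..length w}"
  proof
    fix x assume "x \<in> tvars A \<union> tvars B"
    then have "3*0+3 \<le> x \<and> v x \<in> {1..length w}" using 0(3) by blast
    then show "0 < x \<and> v x \<in> {1..length w}" by simp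
  qed
  show ?case by (rule leaf[OF n 0(1) _ vx]) (use 0(2) in simp)
next
  case (Suc r)
  define z1 where "z1 = 3*Suc r"
  define z2 where "z2 = 3*Suc r+1"
  define u where "u = 3*Suc r+2"
  define k where "k = length t - 1"
  define k1 where "k1 = k1f r t"
  define k2 where "k2 = k2f r t"
  define k3 where "k3 = k3f r t"
  define t1 where "t1 = take (k1 + 1) t"
  define t2 where "t2 = take (k2 + 1) (drop k1 t)"
  define t3 where "t3 = drop (k1 + k2) t"
  define Ord where "Ord = Conj (rel k1 A (V z1)) (Conj (rel k2 (V z1) (V z2)) (rel k3 (V z2) B))"
  define C3 where "C3 = Eq (V u) (V z2)"
  define C2 where "C2 = Eq (V u) (V z1)"
  define C1 where "C1 = Eq (V u) A"
  define M3 where "M3 = Seg r t3 (V u) B"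
  define M2 where "M2 = Seg r t2 (V u) (V z2)"
  define M1 where "M1 = Seg r t1 (V u) (V z1)"
  define a where "a = teval w v A"
  define b where "b = teval w v B"
  define R where "R = {1..length w}"
  have kk: "k1 \<le> k" "k2 \<le> k - k1" "k3 = k - k1 - k2" "k1 \<le> 3^r" "k2 \<le> 3^r" "k3 \<le> 3^r"
    using k3_bound[OF Suc.prems(2)] unfolding k_def k1_def k2_def k3_def k1f_def k2f_def k3f_def by auto
  have lt: "length t = k + 1" using Suc.prems(1) unfolding k_def by (cases t) auto
  have Seg_eq: "Seg (Suc r) t A B = Conj Ord (ITE C3 M3 (ITE C2 M2 (ITE C1 M1 TT)))"
    unfolding Ord_def C3_def C2_def C1_def M3_def M2_def M1_def t1_def t2_def t3_def k1_def k2_def k3_def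
      z1_def z2_def u_def by simp
  have ab: "a \<in> R" "b \<in> R" unfolding a_def b_def R_def using teval_range[OF n] Suc.prems(3) by auto
  have vA: "\<forall>x\<in>tvars A \<union> tvars B. 3*r+6 \<le> x"
  proof
    fix x assume "x \<in> tvars A \<union> tvars B"
    then have "3*Suc r+3 \<le> x" using Suc.prems(3) by blast
    then show "3*r+6 \<le> x" by simp
  qed
  have vA1: "\<And>x. x \<in> tvars A \<Longrightarrow> 3*r+6 \<le> x" and vB1: "\<And>x. x \<in> tvars B \<Longrightarrow> 3*r+6 \<le> x"
    using vA by blast+
  have key: "sem w (prefix r) (\<lambda>x. sat w x (Seg (Suc r) t A B)) (v(z1:=i, z2:=j, u:=l)) \<longleftrightarrow>
     (relN k1 a i \<and> relN k2 i j \<and> relN k3 j b) \<and>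
            (if l = j then spells w l b t3
             else if l = i then spells w l j t2
             else if l = a then spells w l i t1 else True)"
    if ijl: "i \<in> R" "j \<in> R" "l \<in> R" for i j l
  proof -
    define v' where "v' = v(z1:=i, z2:=j, u:=l)"
    have upd: "\<And>x. 3*r+6 \<le> x \<Longrightarrow> v' x = v x" unfolding v'_def z1_def z2_def u_def by auto
    have tA: "teval w v' A = a" unfolding a_def
    proof (rule teval_cong, intro ballI)
      fix x assume "x \<in> tvars A" then have "3*r+6 \<le> x" using vA by blast
      then show "v' x = v x" by (rule upd)
    qed
    have tB: "teval w v' B = b" unfolding b_def
    proof (rule teval_cong, intro ballI)
      fix x assume "x \<in> tvars B" then have "3*r+6 \<le> x" using vA by blast
      then show "v' x = v x" by (rule upd)
    qed
    have rngB: "\<And>x. x \<in> tvars B \<Longrightarrow> 3*r+3 \<le> x \<and> v' x \<in> {1..length w}"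
    proof -
      fix x assume xB: "x \<in> tvars B"
      then have "v x \<in> {1..length w}" using Suc.prems(3) by blast
      moreover have "v' x = v x" using upd vB1[OF xB] by blast
      ultimately show "3*r+3 \<le> x \<and> v' x \<in> {1..length w}" using vB1[OF xB] by simp
    qed
    have vv: "v' z1 = i" "v' z2 = j" "v' u = l" unfolding v'_def z1_def z2_def u_def by auto
    have fvA: "\<forall>x\<in>tvars A \<union> tvars B. 3*r+3 \<le> x"
    proof
      fix x assume "x \<in> tvars A \<union> tvars B" then have "3*r+6 \<le> x" using vA by blast
      then show "3*r+3 \<le> x" by simp
    qed
    have fA1: "\<And>x. x \<in> tvars A \<Longrightarrow> 3*r+3 \<le> x" and fB1: "\<And>x. x \<in> tvars B \<Longrightarrow> 3*r+3 \<le> x"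
      using fvA by blast+
    have inv: "\<And>\<phi> v''. \<forall>x\<in>free_vars \<phi>. 3*r+3 \<le> x \<Longrightarrow> \<forall>y. y \<notin> snd ` set (prefix r) \<longrightarrow> v'' y = v' y \<Longrightarrow> sat w v'' \<phi> = sat w v' \<phi>"
      by (rule inv_fv)
    have fO: "\<forall>x\<in>free_vars Ord. 3*r+3 \<le> x" unfolding Ord_def rel_def using fA1 fB1 by (auto simp: z1_def z2_def)
    have f3: "\<forall>x\<in>free_vars C3. 3*r+3 \<le> x" unfolding C3_def by (auto simp: z2_def u_def)
    have f2: "\<forall>x\<in>free_vars C2. 3*r+3 \<le> x" unfolding C2_def by (auto simp: z1_def u_def)
    have f1: "\<forall>x\<in>free_vars C1. 3*r+3 \<le> x" unfolding C1_def using fA1 by (auto simp: u_def)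
    have e00: "sem w (prefix r) (\<lambda>x. sat w x (Seg (Suc r) t A B)) v' =
      sem w (prefix r) (\<lambda>x. sat w x Ord \<and> (if sat w x C3 then sat w x M3 else if sat w x C2 then sat w x M2
          else if sat w x C1 then sat w x M1 else True)) v'"
      unfolding Seg_eq by (simp add: sat_ITE sat_TT)
    have e01: "sem w (prefix r) (\<lambda>x. sat w x Ord \<and> (if sat w x C3 then sat w x M3 else if sat w x C2 then sat w x M2
          else if sat w x C1 then sat w x M1 else True)) v' = (sat w v' Ord \<and> sem w (prefix r) (\<lambda>x. if sat w x C3 then sat w x M3 else if sat w x C2 then sat w x M2
          else if sat w x C1 then sat w x M1 else True) v')"
      by (rule sem_conj[OF n]) (rule inv[OF fO], blast)
    note e0 = trans[OF e00 e01]
    have e3: "sem w (prefix r) (\<lambda>x. if sat w x C3 then sat w x M3 else if sat w x C2 then sat w x M2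
          else if sat w x C1 then sat w x M1 else True) v' =
        (if sat w v' C3 then sem w (prefix r) (\<lambda>x. sat w x M3) v' else
         sem w (prefix r) (\<lambda>x. if sat w x C2 then sat w x M2 else if sat w x C1 then sat w x M1 else True) v')"
      by (rule sem_ite) (rule inv[OF f3], blast)
    have e2: "sem w (prefix r) (\<lambda>x. if sat w x C2 then sat w x M2 else if sat w x C1 then sat w x M1 else True) v' =
        (if sat w v' C2 then sem w (prefix r) (\<lambda>x. sat w x M2) v' else
         sem w (prefix r) (\<lambda>x. if sat w x C1 then sat w x M1 else True) v')"
      by (rule sem_ite) (rule inv[OF f2], blast)
    have e1: "sem w (prefix r) (\<lambda>x. if sat w x C1 then sat w x M1 else True) v' =
        (if sat w v' C1 then sem w (prefix r) (\<lambda>x. sat w x M1) v' else sem w (prefix r) (\<lambda>x. True) v')"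
      by (rule sem_ite) (rule inv[OF f1], blast)
    have eM3: "sem w (prefix r) (\<lambda>x. sat w x M3) v' = spells w l b t3"
    proof -
      have "sem w (prefix r) (\<lambda>x. sat w x M3) v' = spells w (teval w v' (V u)) (teval w v' B) t3"
        unfolding M3_def
        by (rule Suc.IH) (use kk lt rngB ijl in \<open>auto simp: t3_def u_def v'_def R_def z1_def z2_def\<close>)
      then show ?thesis using tB vv by simp
    qed
    have eM2: "sem w (prefix r) (\<lambda>x. sat w x M2) v' = spells w l j t2"
    proof -
      have "sem w (prefix r) (\<lambda>x. sat w x M2) v' = spells w (teval w v' (V u)) (teval w v' (V z2)) t2"
        unfolding M2_def
        by (rule Suc.IH) (use kk lt ijl in \<open>auto simp: t2_def u_def v'_def R_def z1_def z2_def\<close>)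
      then show ?thesis using vv by simp
    qed
    have eM1: "sem w (prefix r) (\<lambda>x. sat w x M1) v' = spells w l i t1"
    proof -
      have "sem w (prefix r) (\<lambda>x. sat w x M1) v' = spells w (teval w v' (V u)) (teval w v' (V z1)) t1"
        unfolding M1_def
        by (rule Suc.IH) (use kk lt ijl in \<open>auto simp: t1_def u_def v'_def R_def z1_def z2_def\<close>)
      then show ?thesis using vv by simp
    qed
    have eO: "sat w v' Ord = (relN k1 a i \<and> relN k2 i j \<and> relN k3 j b)"
      unfolding Ord_def by (simp add: sat_rel tA tB vv)
    have eC3: "sat w v' C3 = (l = j)" unfolding C3_def by (simp add: vv)
    have eC2: "sat w v' C2 = (l = i)" unfolding C2_def by (simp add: vv)
    have eC1: "sat w v' C1 = (l = a)" unfolding C1_def by (simp add: vv tA)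
    have "sem w (prefix r) (\<lambda>x. sat w x (Seg (Suc r) t A B)) v' \<longleftrightarrow>
     (relN k1 a i \<and> relN k2 i j \<and> relN k3 j b) \<and>
            (if l = j then spells w l b t3
             else if l = i then spells w l j t2
             else if l = a then spells w l i t1 else True)"
      by (simp only: e0 e3 e2 e1 eM3 eM2 eM1 eO eC3 eC2 eC1 sem_True[OF n])
    then show ?thesis unfolding v'_def .
  qed
  have "sem w (prefix (Suc r)) (\<lambda>x. sat w x (Seg (Suc r) t A B)) v \<longleftrightarrow>
     (\<exists>i\<in>R. \<exists>j\<in>R. \<forall>l\<in>R. sem w (prefix r) (\<lambda>x. sat w x (Seg (Suc r) t A B)) (v(z1:=i, z2:=j, u:=l)))"
    unfolding R_def z1_def z2_def u_def by simp
  also have "\<dots> \<longleftrightarrow> (\<exists>i\<in>R. \<exists>j\<in>R. \<forall>l\<in>R. (relN k1 a i \<and> relN k2 i j \<and> relN k3 j b) \<and>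
            (if l = j then spells w l b t3
             else if l = i then spells w l j t2
             else if l = a then spells w l i t1 else True))"
    apply (rule bex_cong[OF refl])+
    apply (rule ball_cong[OF refl])
    apply (rule key)
    by assumption+
  also have "\<dots> \<longleftrightarrow> spells w a b t"
    unfolding R_def t1_def t2_def t3_def
    by (rule split_core[OF Suc.prems(1) k_def kk(1,2,3)]) (use ab in \<open>auto simp: R_def\<close>)
  finally show ?case unfolding a_def b_def .
qed




lemma qcount_pren: "qcount (pren qs m) = length qs + qcount m"
  by (induction qs) auto

lemma qcount_Seg: "qcount (Seg r t A B) = 0"
  by (induction r arbitrary: t A B) (auto simp: lit_def ITE_def rel_def TT_def)

lemma length_prefix: "length (prefix r) = 3*r+1"
  by (induction r) auto

lemma fv_pren: "free_vars (pren qs m) = free_vars m - snd ` set qs"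
  by (induction qs) (auto split: if_splits)

lemma fv_Seg: "free_vars (Seg r t A B) \<subseteq> tvars A \<union> tvars B \<union> snd ` set (prefix r)"
proof (induction r arbitrary: t A B)
  case 0
  then show ?case by (auto simp: lit_def)
next
  case (Suc r)
  show ?case
    apply (simp add: lit_def ITE_def rel_def TT_def)
    using Suc.IH by fastforce
qed

lemma log_bound:
  assumes n: "(n::nat) \<ge> 1" and r: "r = (LEAST r. n \<le> 3^r)"
  shows "real (3*r+1) \<le> 3 * log 3 (real n) + 4"
proof (cases r)
  case 0
  have "log 3 (real n) \<ge> 0" using n by simp
  then show ?thesis using 0 by simp
next
  case (Suc s)
  have "\<not> n \<le> 3^s" using not_less_Least[of s "\<lambda>r. n \<le> 3^r"] r Suc by auto
  then have "real (3^s) < real n" by simp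
  then have "log 3 (real (3^s)) < log 3 (real n)" using n by (subst log_less_cancel_iff) auto
  moreover have "log 3 (real (3^s)) = real s" by simp
  ultimately have "real s < log 3 (real n)" by simp
  then show ?thesis using Suc by simp
qed

lemma least_ex: "(n::nat) \<le> 3^(LEAST r. n \<le> 3^r)"
proof (rule LeastI)
  have "n < 2^n" by (rule less_exp)
  also have "(2::nat)^n \<le> 3^n" by (rule power_mono) auto
  finally show "n \<le> 3^n" by simp
qed

theorem mainTheorem10:
  shows "\<exists>C::real. \<forall>w::bool list. length w \<ge> 1 \<longrightarrow>
           (\<exists>\<phi>. sentence \<phi> \<and> real (qcount \<phi>) \<le> 3 * log 3 (real (length w)) + C
               \<and> models w \<phi>
               \<and> (\<forall>w'::bool list. length w' \<ge> 1 \<and> w' \<noteq> w \<longrightarrow> \<not> models w' \<phi>))"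
proof (rule exI[of _ 4], intro allI impI)
  fix w :: "bool list" assume n: "length w \<ge> 1"
  define r where "r = (LEAST r. length w \<le> 3^r)"
  define \<phi> where "\<phi> = pren (prefix r) (Seg r w MinC MaxC)"
  have wne: "w \<noteq> []" using n by auto
  have wl: "length w - 1 \<le> 3^r" using least_ex[of "length w"] unfolding r_def by simp
  have M: "models w' \<phi> \<longleftrightarrow> spells w' 1 (length w') w" if n': "length w' \<ge> 1" for w'
    unfolding models_def \<phi>_def sat_pren
    using seg_sem[OF n' wne wl, of MinC MaxC "\<lambda>_. 1"] by simp
  show "\<exists>\<phi>. sentence \<phi> \<and> real (qcount \<phi>) \<le> 3 * log 3 (real (length w)) + 4
               \<and> models w \<phi>
               \<and> (\<forall>w'::bool list. length w' \<ge> 1 \<and> w' \<noteq> w \<longrightarrow> \<not> models w' \<phi>)"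
  proof (intro exI conjI allI impI)
    show "sentence \<phi>" unfolding sentence_def \<phi>_def fv_pren using fv_Seg[of r w MinC MaxC] by auto
    show "real (qcount \<phi>) \<le> 3 * log 3 (real (length w)) + 4"
      unfolding \<phi>_def qcount_pren qcount_Seg length_prefix using log_bound[OF n r_def] by simp
    show "models w \<phi>" using M[OF n] n unfolding spells_def by simp
    fix w' assume h: "1 \<le> length w' \<and> w' \<noteq> w"
    show "\<not> models w' \<phi>"
    proof
      assume "models w' \<phi>"
      then have s: "spells w' 1 (length w') w" using M h by blast
      then have len: "length w' = length w" unfolding spells_def by simp
      have "w' = w"
      proof (rule nth_equalityI)
        show "length w' = length w" by (rule len)
        fix i assume "i < length w'"
        then show "w' ! i = w ! i" using s len unfolding spells_def by simp
      qed
      then show False using h by simp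
    qed
  qed
qed


end
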